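(* For positive semidefinite operators $A,B$ on a finite-dimensional Hilbert space, $$\operatorname{tr}\Big[A\,\frac{B}{A+B}\Big]\le\frac12\big(\operatorname{tr}[A+B]-\|A-B\|_1\big).$$
   Context: For positive semidefinite $X,C$ with the support of $X$ contained in the support of $C$, the matrix quotient is $\frac{X}{C}:=\int_0^\infty(\lambda+C)^{-1}X(\lambda+C)^{-1}\,d\lambda$ (for $C>0$ this is the definition; here $C=A+B$, whose support contains that of $B$, so the integral converges). $\|\cdot\|_1$ denotes the trace norm. *)

theory Defs
  imports "HOL-Analysis.Analysis" "HOL-Library.Complex_Order"
begin

text \<open>Operators on a finite-dimensional (complex) Hilbert space are represented as
  complex square matrices indexed by an arbitrary finite type 'n.\<close>

definition adjoint :: "complex^'n^'n \<Rightarrow> complex^'n^'n" where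
  "adjoint A = (\<chi> i j. cnj (A $ j $ i))"

definition cinner :: "complex^'n \<Rightarrow> complex^'n \<Rightarrow> complex" where
  "cinner x y = (\<Sum>i\<in>UNIV. cnj (x $ i) * y $ i)"

definition psd :: "complex^'n^'n \<Rightarrow> bool" where
  "psd A \<longleftrightarrow> adjoint A = A \<and> (\<forall>x. 0 \<le> cinner x (A *v x))"

definition matrix_quotient :: "complex^'n^'n \<Rightarrow> complex^'n^'n \<Rightarrow> complex^'n^'n" where
  "matrix_quotient X C =
     integral {0<..} (\<lambda>l::real. matrix_inv (mat (complex_of_real l) + C) ** X
                                 ** matrix_inv (mat (complex_of_real l) + C))"

definition trace_norm :: "complex^'n^'n \<Rightarrow> real" where
  "trace_norm X = Re (trace (THE S. psd S \<and> S ** S = adjoint X ** X))"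

end

theory Submission
  imports Defs
begin


definition diag :: "('n \<Rightarrow> complex) \<Rightarrow> complex^'n^'n" where
  "diag d = (\<chi> i j. if i = j then d i else 0)"

lemma diag_nth[simp]: "diag d $ i $ j = (if i = j then d i else 0)"
  by (simp add: diag_def)

lemma adjoint_nth[simp]: "adjoint A $ i $ j = cnj (A $ j $ i)"
  by (simp add: adjoint_def)

lemma adjoint_adjoint[simp]: "adjoint (adjoint A) = A"
  by (simp add: vec_eq_iff)

lemma adjoint_mult: "adjoint (A ** B) = adjoint B ** adjoint A"
  by (simp add: vec_eq_iff matrix_matrix_mult_def mult.commute)

lemma adjoint_add: "adjoint (A + B) = adjoint A + adjoint B"
  by (simp add: vec_eq_iff)

lemma adjoint_diff: "adjoint (A - B) = adjoint A - adjoint B"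
  by (simp add: vec_eq_iff)

lemma adjoint_mat_real: "adjoint (mat (complex_of_real r)) = mat (complex_of_real r)"
  by (simp add: vec_eq_iff mat_def)

lemma adjoint_mat1: "adjoint (mat 1) = mat 1"
  by (simp add: vec_eq_iff mat_def)

lemma adjoint_diag: "adjoint (diag d) = diag (\<lambda>i. cnj (d i))"
  by (simp add: vec_eq_iff)

lemma cinner_add_right: "cinner x (y + z) = cinner x y + cinner x z"
  by (simp add: cinner_def algebra_simps sum.distrib)
lemma cinner_add_left: "cinner (x + y) z = cinner x z + cinner y z"
  by (simp add: cinner_def algebra_simps sum.distrib)
lemma cinner_diff_right: "cinner x (y - z) = cinner x y - cinner x z"
  by (simp add: cinner_def algebra_simps sum_subtractf)
lemma cinner_diff_left: "cinner (x - y) z = cinner x z - cinner y z"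
  by (simp add: cinner_def algebra_simps sum_subtractf)
lemma cinner_scale_right: "cinner x (c *s y) = c * cinner x y"
  by (simp add: cinner_def sum_distrib_left algebra_simps)
lemma cinner_scale_left: "cinner (c *s x) y = cnj c * cinner x y"
  by (simp add: cinner_def sum_distrib_left algebra_simps)
lemma cinner_commute: "cinner x y = cnj (cinner y x)"
  by (simp add: cinner_def mult.commute)
lemma cinner_zero_left[simp]: "cinner 0 x = 0" by (simp add: cinner_def)
lemma cinner_zero_right[simp]: "cinner x 0 = 0" by (simp add: cinner_def)
lemma cinner_sum_right: "cinner x (sum f S) = (\<Sum>s\<in>S. cinner x (f s))"
  by (simp add: cinner_def sum_distrib_left sum_component; subst sum.swap; simp)
lemma cinner_sum_left: "cinner (sum f S) x = (\<Sum>s\<in>S. cinner (f s) x)"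
  by (simp add: cinner_def sum_distrib_right sum_component; subst sum.swap; simp)

lemma cinner_adjoint: "cinner x (A *v y) = cinner (adjoint A *v x) y"
  unfolding cinner_def matrix_vector_mult_def
  by (simp add: sum_distrib_left sum_distrib_right algebra_simps; subst sum.swap; simp add: algebra_simps)

lemma cinner_self_norm: "cinner x x = complex_of_real ((norm x)^2)"
proof -
  have "cinner x x = complex_of_real (\<Sum>i\<in>UNIV. (norm (x$i))^2)"
    unfolding cinner_def of_real_sum
    by (intro sum.cong refl) (metis complex_norm_square mult.commute)
  also have "(\<Sum>i\<in>UNIV. (norm (x$i))^2) = (norm x)^2"
    by (simp add: norm_vec_def L2_set_def sum_nonneg)
  finally show ?thesis .
qed

lemma cinner_self_eq_0: "cinner x x = 0 \<longleftrightarrow> x = 0"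
  by (simp add: cinner_self_norm)

lemma Re_cinner_self_ge0: "Re (cinner x x) \<ge> 0" and Im_cinner_self: "Im (cinner x x) = 0"
  by (simp_all add: cinner_self_norm)



definition herm :: "complex^'n^'n \<Rightarrow> bool" where
  "herm A \<longleftrightarrow> adjoint A = A"

lemma herm_cinner: "herm H \<Longrightarrow> cinner x (H *v y) = cinner (H *v x) y"
  by (metis cinner_adjoint herm_def)

lemma herm_quad_real: "herm H \<Longrightarrow> Im (cinner x (H *v x)) = 0"
  by (metis cinner_commute herm_cinner complex_cnj_cancel_iff Reals_cnj_iff complex_is_Real_iff)

lemma quad_lemma:
  fixes \<beta> \<gamma> :: real
  assumes "\<And>t. 2 * t * \<beta> + t^2 * \<gamma> \<ge> 0" 
  shows "\<beta> = 0"
proof (rule ccontr)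
  assume "\<beta> \<noteq> 0"
  define m where "m = \<bar>\<gamma>\<bar> + 1"
  have pos: "m > 0" and gm: "\<gamma> \<le> m - 1" unfolding m_def by auto
  define t where "t = - \<beta> / m"
  have "t^2 * \<gamma> \<le> t^2 * (m - 1)" using gm by (intro mult_left_mono) auto
  moreover have "2 * t * \<beta> + t^2 * (m - 1) = (-(\<beta>^2)) * (m + 1) / (m^2)"
    unfolding t_def using pos by (simp add: field_simps power2_eq_square)
  moreover have "(-(\<beta>^2)) * (m + 1) / (m^2) < 0"
    using \<open>\<beta> \<noteq> 0\<close> pos by (intro divide_neg_pos) (auto intro!: mult_neg_pos)
  ultimately show False using assms[of t] by linarith
qed

lemma vec_lambda_eq_zero_iff: "x = 0 \<longleftrightarrow> (\<forall>i. x $ i = 0)"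
  by (simp add: vec_eq_iff)



lemma cont_cinner: "continuous_on S (\<lambda>x. cinner a x)"
  unfolding cinner_def by (intro continuous_intros)

lemma cont_quad: "continuous_on S (\<lambda>x. Re (cinner x (H *v x)))"
  unfolding cinner_def matrix_vector_mult_def by (intro continuous_intros)

lemma mat_mult_vec: "mat c *v x = c *s x"
  by (simp add: vec_eq_iff matrix_vector_mult_def mat_def if_distrib if_distribR cong: if_cong)

lemma norm_smult_vec: "norm (c *s (x::complex^'n)) = norm c * norm x"
proof -
  have "complex_of_real ((norm (c *s x))^2) = complex_of_real ((norm c * norm x)^2)"
    unfolding cinner_self_norm[symmetric] cinner_scale_left cinner_scale_right
    by (simp add: cinner_self_norm power_mult_distrib complex_norm_square[symmetric])
  hence "(norm (c *s x))^2 = (norm c * norm x)^2" by (simp only: of_real_eq_iff)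
  thus ?thesis by (simp add: power2_eq_iff_nonneg)
qed

lemma mvec_scale: "(H::complex^'n^'m) *v (c *s z) = c *s (H *v z)"
  by (simp add: matrix_vector_mult_def vec_eq_iff sum_distrib_left algebra_simps)

lemma orth_exists:
  fixes v :: "'n \<Rightarrow> complex^'n"
  assumes ON: "\<forall>i\<in>I. \<forall>j\<in>I. cinner (v i) (v j) = (if i = j then 1 else 0)"
    and I: "I \<noteq> UNIV"
  shows "\<exists>w. w \<noteq> 0 \<and> (\<forall>i\<in>I. cinner (v i) w = 0)"
proof (rule ccontr)
  assume H: "\<not> ?thesis"
  define e :: "'n \<Rightarrow> complex^'n" where "e k = (\<chi> i. if i = k then 1 else 0)" for k
  have ce: "cinner x (e k) = cnj (x $ k)" for x k
    unfolding cinner_def e_def by (simp add: if_distrib cong: if_cong)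
  define w where "w k = e k - (\<Sum>i\<in>I. cinner (v i) (e k) *s v i)" for k
  have "cinner (v m) (w k) = 0" if "m \<in> I" for m k
  proof -
    have "cinner (v m) (w k) = cinner (v m) (e k) - (\<Sum>i\<in>I. cinner (v i) (e k) * cinner (v m) (v i))"
      unfolding w_def by (simp add: cinner_diff_right cinner_sum_right cinner_scale_right)
    also have "(\<Sum>i\<in>I. cinner (v i) (e k) * cinner (v m) (v i)) = (\<Sum>i\<in>I. if i = m then cinner (v i) (e k) else 0)"
      using ON that by (intro sum.cong refl) auto
    also have "\<dots> = cinner (v m) (e k)" using that finite[of I] by (simp add: sum.delta')
    finally show ?thesis by simp
  qed
  hence w0: "w k = 0" for k using H by blast
  have one: "(\<Sum>i\<in>I. cnj (v i $ k) * v i $ k) = 1" for k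
  proof -
    have "(w k) $ k = 0" using w0 by simp
    thus ?thesis unfolding w_def by (simp add: ce sum_component) (simp add: e_def)
  qed
  have "of_nat CARD('n) = (\<Sum>k\<in>UNIV. (\<Sum>i\<in>I. cnj (v i $ k) * v i $ k) :: complex)"
    by (simp add: one)
  also have "\<dots> = (\<Sum>i\<in>I. cinner (v i) (v i))"
    unfolding cinner_def by (rule sum.swap)
  also have "\<dots> = of_nat (card I)" using ON by simp
  finally have "CARD('n) = card I" by (metis of_nat_eq_iff)
  moreover have "card I < CARD('n)" using I by (simp add: psubsetI psubset_card_mono)
  ultimately show False by simp
qed

lemma eigen_step:
  fixes v :: "'n \<Rightarrow> complex^'n" and H :: "complex^'n^'n"
  assumes hH: "herm H"
    and ON: "\<forall>i\<in>I. \<forall>j\<in>I. cinner (v i) (v j) = (if i = j then 1 else 0)"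
    and EV: "\<forall>i\<in>I. H *v v i = complex_of_real (d i) *s v i"
    and I: "I \<noteq> UNIV"
  shows "\<exists>w l. cinner w w = 1 \<and> (\<forall>i\<in>I. cinner (v i) w = 0) \<and> H *v w = complex_of_real l *s w"
proof -
  define W where "W = {x. \<forall>i\<in>I. cinner (v i) x = 0}"
  have W_add: "x \<in> W \<Longrightarrow> y \<in> W \<Longrightarrow> x + y \<in> W" for x y
    by (simp add: W_def cinner_add_right)
  have W_scale: "x \<in> W \<Longrightarrow> c *s x \<in> W" for x c
    by (simp add: W_def cinner_scale_right)
  have W_closed: "closed W"
  proof -
    have "W = (\<Inter>i\<in>I. {x. cinner (v i) x = 0})" by (auto simp: W_def)
    moreover have "closed {x. cinner (v i) x = 0}" for i
      by (rule closed_Collect_eq) (auto intro: cont_cinner)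
    ultimately show ?thesis by auto
  qed
  define S where "S = sphere (0::complex^'n) 1 \<inter> W"
  have cS: "compact S" unfolding S_def using W_closed by (intro compact_Int_closed compact_sphere)
  obtain w0 where w0: "w0 \<noteq> 0" "w0 \<in> W" using orth_exists[OF ON I] by (auto simp: W_def)
  have "complex_of_real (1 / norm w0) *s w0 \<in> S"
    using w0 W_scale by (simp add: S_def norm_smult_vec norm_divide)
  hence Sne: "S \<noteq> {}" by blast
  define q where "q x = Re (cinner x (H *v x))" for x
  obtain x where xS: "x \<in> S" and xmax: "\<forall>y\<in>S. q y \<le> q x"
    using continuous_attains_sup[OF cS Sne, of q] cont_quad unfolding q_def by blast
  define l where "l = q x"
  have xW: "x \<in> W" and nx: "norm x = 1" using xS by (auto simp: S_def)
  have cxx: "cinner x x = 1" using nx by (simp add: cinner_self_norm)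
  define L where "L z = complex_of_real l *s z - H *v z" for z
  have Lherm: "cinner a (L b) = cinner (L a) b" for a b
    unfolding L_def cinner_diff_right cinner_diff_left cinner_scale_right cinner_scale_left
      herm_cinner[OF hH] by simp
  have Ladd: "L (a + b) = L a + L b" for a b
    unfolding L_def by (simp add: matrix_vector_right_distrib vector_add_ldistrib)
  have Lscale: "L (c *s a) = c *s L a" for a c
    unfolding L_def by (simp add: matrix_vector_mult_def vec_eq_iff sum_distrib_left algebra_simps)
  have qle: "q z \<le> l * (norm z)^2" if "z \<in> W" for z
  proof (cases "z = 0")
    case True thus ?thesis by (simp add: q_def)
  next
    case False
    define c where "c = complex_of_real (1 / norm z)"
    have "c *s z \<in> S" using False that W_scale
      by (simp add: S_def c_def norm_smult_vec norm_divide)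
    hence "q (c *s z) \<le> l" using xmax l_def by blast
    moreover have "q (c *s z) = q z / (norm z)^2"
      unfolding q_def c_def cinner_scale_left cinner_scale_right mvec_scale
      by (simp add: power2_eq_square)
    ultimately show ?thesis using False by (simp add: field_simps)
  qed
  define f where "f z = Re (cinner z (L z))" for z
  have f_eq: "f z = l * (norm z)^2 - q z" for z
    unfolding f_def q_def L_def cinner_diff_right cinner_scale_right cinner_self_norm by simp
  have fge: "f z \<ge> 0" if "z \<in> W" for z using qle[OF that] f_eq[of z] by simp
  have fx: "f x = 0" using f_eq[of x] nx l_def by simp
  have expand: "cinner (x + a *s y) (L (x + a *s y)) = cinner x (L x) + a * cinner x (L y)
      + cnj a * cinner y (L x) + cnj a * a * cinner y (L y)" for a y
    unfolding Ladd Lscale cinner_add_left cinner_add_right cinner_scale_left cinner_scale_right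
    by (simp add: algebra_simps)
  have Re0: "Re (cinner y (L x)) = 0" if "y \<in> W" for y
  proof (rule quad_lemma)
    fix t :: real
    have "x + complex_of_real t *s y \<in> W" using xW that W_add W_scale by blast
    hence "0 \<le> f (x + complex_of_real t *s y)" by (rule fge)
    also have "f (x + complex_of_real t *s y) = 2 * t * Re (cinner y (L x)) + t^2 * f y"
    proof -
      have "cinner x (L y) = cnj (cinner y (L x))"
        by (metis Lherm cinner_commute)
      thus ?thesis unfolding f_def expand using fx[unfolded f_def]
        by (simp add: power2_eq_square)
    qed
    finally show "2 * t * Re (cinner y (L x)) + t^2 * f y \<ge> 0" .
  qed
  have ortho: "cinner y (L x) = 0" if "y \<in> W" for y
  proof -
    have "Re (cinner (\<i> *s y) (L x)) = 0" using Re0 W_scale that by blast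
    hence "Im (cinner y (L x)) = 0" unfolding cinner_scale_left by simp
    thus ?thesis using Re0[OF that] by (simp add: complex_eq_iff)
  qed
  have LxW: "L x \<in> W"
  proof -
    have "cinner (v i) (L x) = 0" if "i \<in> I" for i
    proof -
      have "L (v i) = complex_of_real (l - d i) *s v i"
        unfolding L_def using EV that by (simp add: vec_eq_iff algebra_simps)
      hence "cinner (v i) (L x) = complex_of_real (l - d i) * cinner (v i) x"
        by (simp only: Lherm cinner_scale_left complex_cnj_complex_of_real)
      thus ?thesis using xW that by (simp add: W_def)
    qed
    thus ?thesis by (simp add: W_def)
  qed
  have "L x = 0" using ortho[OF LxW] by (simp add: cinner_self_eq_0)
  hence "H *v x = complex_of_real l *s x" unfolding L_def by simp
  thus ?thesis using cxx xW unfolding W_def by blast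
qed

lemma spectral_family:
  fixes H :: "complex^'n^'n"
  assumes hH: "herm H"
  shows "\<exists>(v::'n \<Rightarrow> complex^'n) d. (\<forall>i j. cinner (v i) (v j) = (if i = j then 1 else 0)) \<and>
                (\<forall>i. H *v v i = complex_of_real (d i) *s v i)"
proof -
  have "\<exists>(v::'n \<Rightarrow> complex^'n) d. (\<forall>i\<in>I. \<forall>j\<in>I. cinner (v i) (v j) = (if i = j then 1 else 0)) \<and>
                (\<forall>i\<in>I. H *v v i = complex_of_real (d i) *s v i)" for I :: "'n set"
  proof (induction I rule: finite_induct[OF finite])
    case 1 thus ?case by auto
  next
    case (2 j I)
    then obtain v d where ON: "\<forall>i\<in>I. \<forall>j\<in>I. cinner (v i) (v j) = (if i = j then 1 else 0)"
      and EV: "\<forall>i\<in>I. H *v v i = complex_of_real (d i) *s v i" by blast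
    have "I \<noteq> UNIV" using 2 by auto
    then obtain w l where w: "cinner w w = 1" "\<forall>i\<in>I. cinner (v i) w = 0"
      "H *v w = complex_of_real l *s w"
      using eigen_step[OF hH ON EV] by blast
    have w': "\<forall>i\<in>I. cinner w (v i) = 0" using w(2) by (metis cinner_commute complex_cnj_zero)
    show ?case
      apply (rule exI[of _ "v(j := w)"], rule exI[of _ "d(j := l)"])
      using ON EV w w' 2(2) by auto
  qed
  from this[of UNIV] show ?thesis by auto
qed

lemma unitary_right: "adjoint U ** U = mat 1 \<Longrightarrow> U ** adjoint U = mat 1"
  by (metis matrix_left_right_inverse)

theorem spectral:
  fixes H :: "complex^'n^'n"
  assumes hH: "herm H"
  shows "\<exists>U d. adjoint U ** U = mat 1 \<and> U ** adjoint U = mat 1 \<and>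
           H = U ** diag (\<lambda>i. complex_of_real (d i)) ** adjoint U"
proof -
  obtain v :: "'n \<Rightarrow> complex^'n" and d where ON: "\<forall>i j. cinner (v i) (v j) = (if i = j then 1 else 0)"
    and EV: "\<forall>i. H *v v i = complex_of_real (d i) *s v i"
    using spectral_family[OF hH] by blast
  define U :: "complex^'n^'n" where "U = (\<chi> r c. v c $ r)"
  have UU: "adjoint U ** U = mat 1"
    using ON by (simp add: vec_eq_iff matrix_matrix_mult_def U_def mat_def cinner_def)
  have UU': "U ** adjoint U = mat 1" by (rule unitary_right[OF UU])
  have HU: "H ** U = U ** diag (\<lambda>i. complex_of_real (d i))"
  proof -
    have "(H ** U) $ r $ c = (H *v v c) $ r" for r c
      by (simp add: matrix_matrix_mult_def matrix_vector_mult_def U_def)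
    thus ?thesis using EV
      by (simp add: vec_eq_iff matrix_matrix_mult_def U_def if_distrib if_distribR mult.commute cong: if_cong)
  qed
  have "H = H ** (U ** adjoint U)" by (simp add: UU')
  also have "\<dots> = U ** diag (\<lambda>i. complex_of_real (d i)) ** adjoint U"
    by (simp add: matrix_mul_assoc HU)
  finally show ?thesis using UU UU' by blast
qed



lemma psd_herm: "psd A \<Longrightarrow> herm A" by (simp add: psd_def herm_def)

lemma complex_nonneg_iff: "(0::complex) \<le> z \<longleftrightarrow> Re z \<ge> 0 \<and> Im z = 0"
  by (simp add: less_eq_complex_def)

lemma psd_iff: "psd A \<longleftrightarrow> herm A \<and> (\<forall>x. Re (cinner x (A *v x)) \<ge> 0)"
  unfolding psd_def herm_def complex_nonneg_iff
  using herm_quad_real[unfolded herm_def] by blast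

lemma cinner_conj: "cinner x ((adjoint U ** A ** U) *v x) = cinner (U *v x) (A *v (U *v x))"
  by (metis cinner_adjoint adjoint_adjoint matrix_vector_mul_assoc)

lemma psd_conj: "psd A \<Longrightarrow> psd (adjoint U ** A ** U)"
  unfolding psd_iff herm_def cinner_conj
  by (simp add: adjoint_mult matrix_mul_assoc)

lemma cnj_mult_self: "cnj z * z = (complex_of_real (norm z))^2"
  by (metis complex_norm_square mult.commute of_real_power)

lemma conj_prod:
  assumes "adjoint V ** V = mat 1"
  shows "(V ** a ** adjoint V) ** (V ** b ** adjoint V) = V ** (a ** b) ** adjoint V"
proof -
  have "(V ** a ** adjoint V) ** (V ** b ** adjoint V) = V ** a ** (adjoint V ** V) ** b ** adjoint V"
    by (simp add: matrix_mul_assoc)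
  thus ?thesis using assms by (simp add: matrix_mul_assoc)
qed

lemma trace_conj:
  assumes "adjoint V ** V = mat 1"
  shows "trace (V ** a ** adjoint V) = trace a"
proof -
  have "trace (V ** a ** adjoint V) = trace (V ** (a ** adjoint V))" by (simp add: matrix_mul_assoc)
  also have "\<dots> = trace ((a ** adjoint V) ** V)" by (rule trace_mul_sym)
  also have "\<dots> = trace a" using assms by (simp add: matrix_mul_assoc[symmetric])
  finally show ?thesis .
qed

lemma sum_if_mult: fixes i :: "'n::finite" shows "(\<Sum>k\<in>UNIV. (if i = k then x else 0) * f k) = x * (f i :: 'a::comm_ring_1)"
proof -
  have "(\<Sum>k\<in>UNIV. (if i = k then x else 0) * f k) = (\<Sum>k\<in>UNIV. if i = k then x * f k else 0)"
    by (intro sum.cong) auto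
  thus ?thesis by (simp add: sum.delta)
qed

lemma diag_mult: "diag a ** diag b = diag (\<lambda>i. a i * b i)"
  unfolding vec_eq_iff matrix_matrix_mult_def diag_nth vec_lambda_beta
  by (simp add: sum_if_mult)

lemma mm_add_r: "((A::complex^'n^'m) + B) ** C = A ** C + B ** C"
  by (simp add: vec_eq_iff matrix_matrix_mult_def algebra_simps sum.distrib)
lemma mm_add_l: "(C::complex^'n^'m) ** (A + B) = C ** A + C ** B"
  by (simp add: vec_eq_iff matrix_matrix_mult_def algebra_simps sum.distrib)
lemma mm_diff_r: "((A::complex^'n^'m) - B) ** C = A ** C - B ** C"
  by (simp add: vec_eq_iff matrix_matrix_mult_def algebra_simps sum_subtractf)
lemma mm_diff_l: "(C::complex^'n^'m) ** (A - B) = C ** A - C ** B"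
  by (simp add: vec_eq_iff matrix_matrix_mult_def algebra_simps sum_subtractf)
lemma mm_neg_r: "(- (A::complex^'n^'m)) ** C = - (A ** C)"
  by (simp add: vec_eq_iff matrix_matrix_mult_def sum_negf)
lemma mm_neg_l: "(C::complex^'n^'m) ** (- A) = - (C ** A)"
  by (simp add: vec_eq_iff matrix_matrix_mult_def sum_negf)
lemma mm_zero_l[simp]: "(0::complex^'n^'m) ** C = 0"
  by (simp add: vec_eq_iff matrix_matrix_mult_def)
lemma mm_zero_r[simp]: "(C::complex^'n^'m) ** 0 = 0"
  by (simp add: vec_eq_iff matrix_matrix_mult_def)
lemma trace_neg: "trace (- (A::complex^'n^'n)) = - trace A"
  by (simp add: trace_def sum_negf)

lemma trace_diag: "trace (diag a) = sum a UNIV"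
  by (simp add: trace_def)

lemma psd_diag_conj:
  assumes "\<forall>i. d i \<ge> 0"
  shows "psd (V ** diag (\<lambda>i. complex_of_real (d i)) ** adjoint V)"
proof -
  have "psd (diag (\<lambda>i. complex_of_real (d i)))"
    unfolding psd_iff herm_def
  proof (intro conjI allI)
    show "adjoint (diag (\<lambda>i. complex_of_real (d i))) = diag (\<lambda>i. complex_of_real (d i))"
      by (simp add: adjoint_diag)
    fix x :: "complex^'a"
    have "cinner x (diag (\<lambda>i. complex_of_real (d i)) *v x) = (\<Sum>i\<in>UNIV. complex_of_real (d i * (norm (x$i))^2))"
      unfolding cinner_def matrix_vector_mult_def
      by (intro sum.cong refl) (simp add: if_distrib if_distribR cong: if_cong, metis cnj_mult_self mult.commute)
    thus "Re (cinner x (diag (\<lambda>i. complex_of_real (d i)) *v x)) \<ge> 0"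
      using assms by (simp add: sum_nonneg)
  qed
  from psd_conj[OF this, of "adjoint V"] show ?thesis by simp
qed



lemma psd_kernel:
  assumes "psd A" "Re (cinner x (A *v x)) = 0"
  shows "A *v x = 0"
proof -
  have hA: "herm A" using assms(1) psd_herm by blast
  have nn: "Re (cinner z (A *v z)) \<ge> 0" for z using assms(1) psd_iff by blast
  have Re0: "Re (cinner y (A *v x)) = 0" for y
  proof (rule quad_lemma)
    fix t :: real
    define a where "a = complex_of_real t"
    have "cinner (x + a *s y) (A *v (x + a *s y)) = cinner x (A *v x) + a * cinner x (A *v y)
      + cnj a * cinner y (A *v x) + cnj a * a * cinner y (A *v y)"
      by (simp add: matrix_vector_right_distrib mvec_scale cinner_add_left cinner_add_right
          cinner_scale_left cinner_scale_right algebra_simps)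
    moreover have "cinner x (A *v y) = cnj (cinner y (A *v x))"
      by (metis herm_cinner[OF hA] cinner_commute)
    ultimately have "Re (cinner (x + a *s y) (A *v (x + a *s y))) = 2 * t * Re (cinner y (A *v x)) + t^2 * Re (cinner y (A *v y))"
      using assms(2) by (simp add: a_def power2_eq_square)
    thus "2 * t * Re (cinner y (A *v x)) + t^2 * Re (cinner y (A *v y)) \<ge> 0" using nn by metis
  qed
  have "Re (cinner (A *v x) (A *v x)) = 0" by (rule Re0)
  thus ?thesis by (simp add: cinner_self_norm)
qed

lemma psd_kernel_mat:
  assumes "psd A" "\<forall>x. Re (cinner x (A *v x)) = 0"
  shows "A = 0"
  using psd_kernel[OF assms(1)] assms(2) by (metis matrix_eq matrix_vector_mult_0)

definition evec :: "'n \<Rightarrow> complex^'n" where "evec k = (\<chi> i. if i = k then 1 else 0)"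

lemma cinner_evec: "cinner (evec k) (A *v evec k) = A $ k $ k"
  unfolding cinner_def evec_def matrix_vector_mult_def
  by (simp add: if_distrib if_distribR cong: if_cong)

lemma mvec_evec: "(A *v evec k) $ i = A $ i $ k"
  unfolding evec_def matrix_vector_mult_def
  by (simp add: if_distrib if_distribR cong: if_cong)

lemma psd_diag_nonneg: "psd A \<Longrightarrow> Re (A $ k $ k) \<ge> 0 \<and> Im (A $ k $ k) = 0"
  by (metis cinner_evec psd_def complex_nonneg_iff)

lemma psd_zero_diag:
  assumes "psd A" "Re (A $ k $ k) = 0"
  shows "A $ i $ k = 0" "A $ k $ i = 0"
proof -
  have "A *v evec k = 0" using psd_kernel[OF assms(1)] assms(2) by (simp add: cinner_evec)
  hence "A $ i $ k = 0" by (metis mvec_evec zero_index)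
  thus "A $ i $ k = 0" .
  have "A $ k $ i = cnj (A $ i $ k)" using assms(1) unfolding psd_def
    by (metis adjoint_nth)
  thus "A $ k $ i = 0" using \<open>A $ i $ k = 0\<close> by simp
qed

lemma psd_trace_zero:
  assumes "psd A" "Re (trace A) = 0"
  shows "A = 0"
proof -
  have nn: "\<forall>k. Re (A $ k $ k) \<ge> 0" using psd_diag_nonneg[OF assms(1)] by blast
  have "Re (trace A) = (\<Sum>k\<in>UNIV. Re (A $ k $ k))" by (simp add: trace_def)
  hence "\<forall>k\<in>UNIV. Re (A $ k $ k) = 0" using assms(2) nn sum_nonneg_eq_0_iff[of UNIV "\<lambda>k. Re (A $ k $ k)"]
    by simp
  hence "A $ i $ k = 0" for i k using psd_zero_diag[OF assms(1)] by blast
  thus ?thesis by (simp add: vec_eq_iff)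
qed

lemma psd_trace_nonneg: "psd A \<Longrightarrow> Re (trace A) \<ge> 0"
  using psd_diag_nonneg[of A] by (simp add: trace_def sum_nonneg)

lemma herm_adj: "herm D \<Longrightarrow> adjoint D = D" by (simp add: herm_def)

lemma conj_zero_imp:
  assumes "psd S" "herm D" "D ** S ** D = 0"
  shows "S ** D = 0"
proof -
  have "Re (cinner (D *v x) (S *v (D *v x))) = 0" for x
  proof -
    have "cinner x ((adjoint D ** S ** D) *v x) = 0" using assms by (simp add: herm_adj)
    thus ?thesis unfolding cinner_conj by simp
  qed
  hence "S *v (D *v x) = 0" for x using psd_kernel[OF assms(1)] by blast
  thus ?thesis by (metis matrix_eq matrix_vector_mul_assoc matrix_vector_mult_0)
qed

lemma psd_sqrt_unique:
  assumes S: "psd S" and T: "psd T" and eq: "S ** S = T ** T"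
  shows "S = T"
proof -
  define D where "D = S - T"
  define E where "E = S + T"
  have hD: "herm D" using S T unfolding D_def psd_def herm_def by (simp add: adjoint_diff)
  have ED: "E ** D = - (D ** E)"
    unfolding D_def E_def using eq
    by (simp add: mm_add_l mm_add_r mm_diff_l mm_diff_r algebra_simps)
  have "trace (D ** E ** D) = - trace (D ** D ** E)"
    by (simp add: matrix_mul_assoc[symmetric] ED mm_neg_l trace_neg)
  also have "trace (D ** D ** E) = trace (D ** E ** D)"
    by (metis matrix_mul_assoc trace_mul_sym)
  finally have tr0: "trace (D ** E ** D) = 0" by simp
  have split: "D ** E ** D = D ** S ** D + D ** T ** D"
    unfolding E_def by (simp add: mm_add_l mm_add_r)
  have pS: "psd (D ** S ** D)" using psd_conj[OF S, of D] herm_adj[OF hD] by simp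
  have pT: "psd (D ** T ** D)" using psd_conj[OF T, of D] herm_adj[OF hD] by simp
  have "Re (trace (D ** S ** D)) + Re (trace (D ** T ** D)) = 0"
    using arg_cong[OF tr0[unfolded split trace_add], of Re] by simp
  hence "Re (trace (D ** S ** D)) = 0" "Re (trace (D ** T ** D)) = 0"
    using psd_trace_nonneg[OF pS] psd_trace_nonneg[OF pT] by linarith+
  hence "D ** S ** D = 0" "D ** T ** D = 0" using psd_trace_zero pS pT by blast+
  hence "S ** D = 0" "T ** D = 0" using conj_zero_imp S T hD by blast+
  hence DD: "D ** mat 1 ** D = 0" unfolding D_def by (simp add: mm_diff_r)
  have p1: "psd (mat 1 :: complex^'n^'n)"
    unfolding psd_iff herm_def by (simp add: adjoint_mat1 Re_cinner_self_ge0)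
  have "mat 1 ** D = 0" using conj_zero_imp[OF p1 hD DD] .
  hence "D = 0" by simp
  thus ?thesis unfolding D_def by simp
qed

lemma trace_norm_eq:
  assumes V: "adjoint V ** V = mat 1" and X: "X = V ** diag (\<lambda>i. complex_of_real (x i)) ** adjoint V"
  shows "trace_norm X = (\<Sum>i\<in>UNIV. \<bar>x i\<bar>)"
proof -
  define S where "S = V ** diag (\<lambda>i. complex_of_real \<bar>x i\<bar>) ** adjoint V"
  have pS: "psd S" unfolding S_def by (rule psd_diag_conj) simp
  have aX: "adjoint X = X" unfolding X by (simp add: adjoint_mult adjoint_diag matrix_mul_assoc)
  have SS: "S ** S = adjoint X ** X"
  proof -
    have "(\<lambda>i. complex_of_real \<bar>x i\<bar> * complex_of_real \<bar>x i\<bar>) = (\<lambda>i. complex_of_real (x i) * complex_of_real (x i))"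
      by (rule ext) (metis abs_mult_self_eq of_real_mult)
    thus ?thesis unfolding aX unfolding S_def X conj_prod[OF V] diag_mult by simp
  qed
  have "(THE S. psd S \<and> S ** S = adjoint X ** X) = S"
  proof (rule the_equality)
    show "psd S \<and> S ** S = adjoint X ** X" using pS SS by blast
    fix S' assume "psd S' \<and> S' ** S' = adjoint X ** X"
    thus "S' = S" using psd_sqrt_unique[OF _ pS] SS by auto
  qed
  hence "trace_norm X = Re (trace S)" by (simp add: trace_norm_def)
  also have "trace S = (\<Sum>i\<in>UNIV. complex_of_real \<bar>x i\<bar>)"
    unfolding S_def trace_conj[OF V] trace_diag ..
  finally show ?thesis by simp
qed



lemma inv_sq_has_integral:
  fixes m :: real
  assumes m: "m > 0"
  shows "((\<lambda>l. 1 / (l + m)^2) has_integral 1 / m) {0<..}"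
proof -
  have "((\<lambda>l. 1 / (l + m)^2) has_integral 1 / m) {0..}"
  proof (rule has_integral_to_inf)
    fix y :: real
    show "(\<lambda>l. 1 / (l + m)^2) integrable_on {0..y}"
      using m by (intro integrable_continuous_interval continuous_intros) auto
  next
    fix y :: real assume "y \<ge> 0" thus "1 / (y + m)^2 \<ge> 0" by simp
  next
    have F: "((\<lambda>l. 1 / (l + m)^2) has_integral ((- 1 / (y + m)) - (- 1 / (0 + m)))) {0..y}"
      if "y \<ge> 0" for y
    proof (rule fundamental_theorem_of_calculus[OF that])
      fix x assume x: "x \<in> {0..y}"
      hence "x + m \<noteq> 0" using m by auto
      thus "((\<lambda>l. - 1 / (l + m)) has_vector_derivative 1 / (x + m)^2) (at x within {0..y})"
        unfolding has_real_derivative_iff_has_vector_derivative[symmetric]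
        by (auto intro!: derivative_eq_intros simp: power2_eq_square field_simps)
    qed
    have ev: "\<forall>\<^sub>F y in at_top. integral {0..y} (\<lambda>l. 1 / (l + m)^2) = 1 / m - 1 / (y + m)"
    proof (intro eventually_at_top_linorderI[of 0])
      fix y :: real assume "y \<ge> 0"
      from F[OF this] have "((\<lambda>l. 1 / (l + m)^2) has_integral (1 / m - 1 / (y + m))) {0..y}" by simp
      thus "integral {0..y} (\<lambda>l. 1 / (l + m)^2) = 1 / m - 1 / (y + m)" by (rule integral_unique)
    qed
    have "filterlim (\<lambda>y. y + m) at_top at_top"
      using filterlim_tendsto_add_at_top[OF tendsto_const[of m] filterlim_ident] by (simp add: add.commute)
    hence "((\<lambda>y. 1 / (y + m)) \<longlongrightarrow> 0) at_top"
      by (intro tendsto_divide_0[OF tendsto_const] filterlim_at_top_imp_at_infinity)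
    hence "((\<lambda>y. 1 / m - 1 / (y + m)) \<longlongrightarrow> 1 / m - 0) at_top"
      by (intro tendsto_intros)
    thus "((\<lambda>y. integral {0..y} (\<lambda>l. 1 / (l + m)^2)) \<longlongrightarrow> 1 / m) at_top"
      using ev by (simp add: filterlim_cong tendsto_cong)
  qed
  moreover have "negligible {x \<in> {0..} - {0<..}. 1 / (x + m)^2 \<noteq> (0::real)}"
    by (rule negligible_subset[of "{0}"]) auto
  moreover have "negligible {x \<in> {0<..} - {0..}. 1 / (x + m)^2 \<noteq> (0::real)}"
    by (rule negligible_subset[of "{}"]) auto
  ultimately show ?thesis using has_integral_spike_set_eq[of "{0..}" "{0<..}" "\<lambda>l. 1 / (l + m)^2"] by blast
qed

lemma kf_integrable:
  fixes a b :: real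
  assumes a: "a > 0" and b: "b > 0"
  shows "(\<lambda>l. 1 / ((l + a) * (l + b))) integrable_on {0<..}"
proof (rule measurable_bounded_by_integrable_imp_integrable_real)
  define c where "c = min a b"
  have c: "c > 0" using a b by (simp add: c_def)
  show "(\<lambda>l. 1 / ((l + a) * (l + b))) \<in> borel_measurable (lebesgue_on {0<..})"
    by (rule continuous_imp_measurable_on_sets_lebesgue) (use a b in \<open>auto intro!: continuous_intros\<close>)
  show "(\<lambda>l. 1 / (l + c)^2) integrable_on {0<..}"
    using inv_sq_has_integral[OF c] by blast
  show "{0<..} \<in> sets (lebesgue :: real measure)" by simp
  fix l :: real assume "l \<in> {0<..}"
  hence l: "l > 0" by simp
  have "(l + c)^2 \<le> (l + a) * (l + b)" unfolding power2_eq_square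
    using l c by (intro mult_mono) (auto simp: c_def)
  moreover have "(l + c)^2 > 0" using l c by simp
  moreover have "(l + a) * (l + b) > 0" using l a b by simp
  ultimately have "1 / ((l + a) * (l + b)) \<le> 1 / (l + c)^2"
    using l a b c by (intro divide_left_mono mult_pos_pos) auto
  moreover have "(l + a) * (l + b) > 0" using l a b by simp
  ultimately show "\<bar>1 / ((l + a) * (l + b))\<bar> \<le> 1 / (l + c)^2" by simp
qed

lemma kf_ge:
  fixes a b :: real
  assumes a: "a > 0" and b: "b > 0"
  shows "integral {0<..} (\<lambda>l. 1 / ((l + a) * (l + b))) \<ge> 2 / (a + b)"
proof -
  define m where "m = (a + b) / 2"
  have m: "m > 0" using a b by (simp add: m_def)
  have "2 / (a + b) = integral {0<..} (\<lambda>l. 1 / (l + m)^2)"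
    using integral_unique[OF inv_sq_has_integral[OF m]] by (simp add: m_def)
  also have "\<dots> \<le> integral {0<..} (\<lambda>l. 1 / ((l + a) * (l + b)))"
  proof (rule integral_le)
    show "(\<lambda>l. 1 / (l + m)^2) integrable_on {0<..}" using inv_sq_has_integral[OF m] by blast
    show "(\<lambda>l. 1 / ((l + a) * (l + b))) integrable_on {0<..}" by (rule kf_integrable[OF a b])
    fix l :: real assume "l \<in> {0<..}"
    hence l: "l > 0" by simp
    have "(l + a) * (l + b) \<le> (l + m)^2"
    proof -
      have "(l + m)^2 - (l + a) * (l + b) = ((a - b) / 2)^2"
        by (simp add: m_def power2_eq_square field_simps)
      thus ?thesis by (metis diff_ge_0_iff_ge zero_le_power2)
    qed
    moreover have "(l + a) * (l + b) > 0" using l a b by simp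
    moreover have "(l + m)^2 > 0" using l m by simp
    ultimately show "1 / (l + m)^2 \<le> 1 / ((l + a) * (l + b))"
      using l a b m by (intro divide_left_mono mult_pos_pos) auto
  qed
  finally show ?thesis .
qed

lemma kf_diag:
  fixes a :: real
  assumes a: "a > 0"
  shows "integral {0<..} (\<lambda>l. 1 / ((l + a) * (l + a))) = 1 / a"
  using integral_unique[OF inv_sq_has_integral[OF a]] by (simp add: power2_eq_square)



lemma mat_comm: "mat x ** (A::complex^'n^'n) = A ** mat x"
  by (simp add: vec_eq_iff matrix_matrix_mult_def mat_def if_distrib if_distribR sum.delta sum.delta' mult.commute cong: if_cong)

lemma diag_const: "diag (\<lambda>i. x) = mat x"
  by (simp add: vec_eq_iff mat_def)

lemma matrix_inv_eq:
  fixes M N :: "complex^'n^'n"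
  assumes "M ** N = mat 1" "N ** M = mat 1"
  shows "matrix_inv M = N"
proof -
  have ex: "\<exists>N'. M ** N' = mat 1 \<and> N' ** M = mat 1" using assms by blast
  define N' where "N' = matrix_inv M"
  have N': "M ** N' = mat 1 \<and> N' ** M = mat 1"
    unfolding N'_def matrix_inv_def by (rule someI_ex[OF ex])
  have "N' = N' ** (M ** N)" using assms by simp
  also have "\<dots> = (N' ** M) ** N" by (simp add: matrix_mul_assoc)
  also have "\<dots> = N" using N' by simp
  finally show ?thesis unfolding N'_def .
qed

lemma inv_formula:
  fixes U :: "complex^'n^'n" and c :: "'n \<Rightarrow> real"
  assumes U1: "adjoint U ** U = mat 1" and U2: "U ** adjoint U = mat 1"
    and C: "C = U ** diag (\<lambda>i. complex_of_real (c i)) ** adjoint U"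
    and c: "\<forall>i. c i \<ge> 0" and l: "l > 0"
  shows "matrix_inv (mat (complex_of_real l) + C) = U ** diag (\<lambda>i. complex_of_real (1 / (l + c i))) ** adjoint U"
proof -
  have ml: "mat (complex_of_real l) = U ** diag (\<lambda>i. complex_of_real l) ** adjoint U"
    unfolding diag_const mat_comm[symmetric] by (simp add: matrix_mul_assoc[symmetric] U2)
  have M: "mat (complex_of_real l) + C = U ** diag (\<lambda>i. complex_of_real (l + c i)) ** adjoint U"
  proof -
    have "diag (\<lambda>i. complex_of_real (l + c i)) = diag (\<lambda>i. complex_of_real l) + diag (\<lambda>i. complex_of_real (c i))"
      by (simp add: vec_eq_iff)
    thus ?thesis unfolding ml C by (simp add: mm_add_l mm_add_r)
  qed
  have pos0: "l + c i \<noteq> 0" for i using c l by (metis add_pos_nonneg less_irrefl)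
  have pos: "complex_of_real l + complex_of_real (c i) \<noteq> 0" for i
    using pos0[of i] by (metis of_real_add of_real_eq_0_iff)
  have d1: "diag (\<lambda>i. complex_of_real (l + c i) * complex_of_real (1 / (l + c i))) = mat 1"
    "diag (\<lambda>i. complex_of_real (1 / (l + c i)) * complex_of_real (l + c i)) = mat 1"
    using pos by (simp_all add: vec_eq_iff mat_def field_simps)
  show ?thesis unfolding M
    by (rule matrix_inv_eq) (simp_all only: conj_prod[OF U1] diag_mult d1 U2 matrix_mul_rid)
qed

lemma sum_mult_if: fixes b :: "'n::finite" shows "(\<Sum>j\<in>UNIV. g j * (if b = j then h j else 0)) = g b * (h b :: 'a::comm_ring_1)"
proof -
  have "(\<Sum>j\<in>UNIV. g j * (if b = j then h j else 0)) = (\<Sum>j\<in>UNIV. if b = j then g j * h j else 0)"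
    by (intro sum.cong) auto
  thus ?thesis by (simp add: sum.delta)
qed

lemma sum_units:
  fixes M :: "complex^'n^'n" and f :: "'n \<Rightarrow> 'n \<Rightarrow> real"
  shows "(\<Sum>i\<in>UNIV. \<Sum>j\<in>UNIV. f i j *\<^sub>R (\<chi> a b. if a = i \<and> b = j then M $ i $ j else 0))
     = (\<chi> a b. complex_of_real (f a b) * M $ a $ b)"
proof -
  have "(\<Sum>i\<in>UNIV. \<Sum>j\<in>UNIV. (f i j *\<^sub>R (\<chi> a b. if a = i \<and> b = j then M $ i $ j else 0)) $ a $ b)
      = complex_of_real (f a b) * M $ a $ b" for a b
  proof -
    have "(\<Sum>i\<in>UNIV. \<Sum>j\<in>UNIV. (f i j *\<^sub>R (\<chi> a b. if a = i \<and> b = j then M $ i $ j else 0)) $ a $ b)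
       = (\<Sum>i\<in>UNIV. if i = a then (\<Sum>j\<in>UNIV. if j = b then complex_of_real (f a b) * M $ a $ b else 0) else 0)"
      by (intro sum.cong refl) (simp only: vector_scaleR_component vec_lambda_beta, auto simp: scaleR_conv_of_real sum_mult_if)
    thus ?thesis by simp
  qed
  thus ?thesis by (simp add: vec_eq_iff sum_component)
qed

lemma diag_sandwich: "diag r ** X ** diag s = (\<chi> i j. r i * X $ i $ j * s j)"
proof -
  have "(diag r ** X ** diag s) $ i $ j = r i * X $ i $ j * s j" for i j
  proof -
    have "(diag r ** X) $ i $ k = r i * X $ i $ k" for k
      unfolding matrix_matrix_mult_def by (simp add: sum_if_mult)
    thus ?thesis unfolding matrix_matrix_mult_def[of _ "diag s"]
      by (simp add: if_distrib cong: if_cong)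
  qed
  thus ?thesis by (simp add: vec_eq_iff)
qed

lemma mm_scaleR_l: "(r *\<^sub>R (A::complex^'n^'m)) ** B = r *\<^sub>R (A ** B)"
  by (simp add: vec_eq_iff matrix_matrix_mult_def scaleR_sum_right)
lemma mm_scaleR_r: "(A::complex^'n^'m) ** (r *\<^sub>R B) = r *\<^sub>R (A ** B)"
  by (simp add: vec_eq_iff matrix_matrix_mult_def scaleR_sum_right)

lemma bl_conj: "bounded_linear (\<lambda>M::complex^'n^'n. U ** M ** V)"
proof -
  have "linear (\<lambda>M::complex^'n^'n. U ** M ** V)"
    by (rule linearI) (simp_all add: mm_add_l mm_add_r mm_scaleR_l mm_scaleR_r)
  thus ?thesis using linear_conv_bounded_linear by blast
qed

definition Kf :: "('n \<Rightarrow> real) \<Rightarrow> 'n \<Rightarrow> 'n \<Rightarrow> real" where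
  "Kf c i j = integral {0<..} (\<lambda>l. 1 / ((l + c i) * (l + c j)))"

lemma mq_formula:
  fixes U B C :: "complex^'n^'n" and c :: "'n \<Rightarrow> real"
  assumes U1: "adjoint U ** U = mat 1" and U2: "U ** adjoint U = mat 1"
    and C: "C = U ** diag (\<lambda>i. complex_of_real (c i)) ** adjoint U"
    and c: "\<forall>i. c i \<ge> 0"
    and B0: "\<forall>i j. (adjoint U ** B ** U) $ i $ j \<noteq> 0 \<longrightarrow> c i > 0 \<and> c j > 0"
  shows "matrix_quotient B C = U ** (\<chi> i j. complex_of_real (Kf c i j) * (adjoint U ** B ** U) $ i $ j) ** adjoint U"
proof -
  define B' where "B' = adjoint U ** B ** U"
  define kf where "kf i j l = 1 / ((l + c i) * (l + c j))" for i j and l :: real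
  define E where "E i j = (\<chi> a b. if a = i \<and> b = j then B' $ i $ j else 0)" for i j
  define G where "G l = (\<Sum>i\<in>UNIV. \<Sum>j\<in>UNIV. kf i j l *\<^sub>R E i j)" for l
  define Q' where "Q' = (\<chi> i j. complex_of_real (Kf c i j) * B' $ i $ j)"
  have GQ: "(G has_integral Q') {0<..}"
  proof -
    have "((\<lambda>l. kf i j l *\<^sub>R E i j) has_integral (Kf c i j *\<^sub>R E i j)) {0<..}" for i j
    proof (cases "B' $ i $ j = 0")
      case True
      hence "E i j = 0" by (simp add: E_def vec_eq_iff)
      thus ?thesis by simp
    next
      case False
      hence "c i > 0" "c j > 0" using B0 B'_def by auto
      hence "(kf i j has_integral Kf c i j) {0<..}"
        unfolding kf_def Kf_def using kf_integrable by (simp add: integrable_integral)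
      thus ?thesis by (rule has_integral_scaleR_left)
    qed
    hence "(G has_integral (\<Sum>i\<in>UNIV. \<Sum>j\<in>UNIV. Kf c i j *\<^sub>R E i j)) {0<..}"
      unfolding G_def by (intro has_integral_sum) auto
    moreover have "(\<Sum>i\<in>UNIV. \<Sum>j\<in>UNIV. Kf c i j *\<^sub>R E i j) = Q'"
      unfolding E_def Q'_def by (rule sum_units)
    ultimately show ?thesis by simp
  qed
  have lin: "((\<lambda>M. U ** M ** adjoint U) \<circ> G has_integral (U ** Q' ** adjoint U)) {0<..}"
    by (rule has_integral_linear[OF GQ bl_conj])
  have eq: "matrix_inv (mat (complex_of_real l) + C) ** B ** matrix_inv (mat (complex_of_real l) + C)
       = ((\<lambda>M. U ** M ** adjoint U) \<circ> G) l" if "l \<in> {0<..}" for l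
  proof -
    have l: "l > 0" using that by simp
    define r where "r i = complex_of_real (1 / (l + c i))" for i
    have "matrix_inv (mat (complex_of_real l) + C) ** B ** matrix_inv (mat (complex_of_real l) + C)
        = (U ** diag r ** adjoint U) ** B ** (U ** diag r ** adjoint U)"
      unfolding inv_formula[OF U1 U2 C c l] r_def ..
    also have "\<dots> = U ** (diag r ** B' ** diag r) ** adjoint U"
      unfolding B'_def by (simp add: matrix_mul_assoc)
    also have "diag r ** B' ** diag r = G l"
      unfolding diag_sandwich G_def E_def sum_units r_def kf_def
      by (simp add: vec_eq_iff)
    finally show ?thesis by simp
  qed
  have "((\<lambda>l. matrix_inv (mat (complex_of_real l) + C) ** B ** matrix_inv (mat (complex_of_real l) + C))
        has_integral (U ** Q' ** adjoint U)) {0<..}"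
    using lin by (subst has_integral_cong[OF eq]) auto
  hence "matrix_quotient B C = U ** Q' ** adjoint U"
    unfolding matrix_quotient_def by (rule integral_unique)
  thus ?thesis unfolding Q'_def B'_def .
qed



lemma term_nonneg:
  fixes \<alpha> \<pi> :: complex and K s :: real
  assumes s: "s \<ge> 0" and h: "\<alpha> \<noteq> 0 \<Longrightarrow> s > 0 \<and> K \<ge> 2 / s"
  shows "0 \<le> (cmod \<alpha>)^2 * K + s / 2 * (cmod \<pi>)^2 - 2 * Re (\<alpha> * cnj \<pi>)"
proof (cases "\<alpha> = 0")
  case True thus ?thesis using s by simp
next
  case False
  with h have s0: "s > 0" and K: "K \<ge> 2 / s" by auto
  define x where "x = cmod \<alpha>"
  define y where "y = cmod \<pi>"
  have "Re (\<alpha> * cnj \<pi>) \<le> x * y"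
    unfolding x_def y_def by (metis complex_Re_le_cmod complex_mod_cnj norm_mult)
  moreover have "x^2 * K \<ge> x^2 * (2 / s)" using K by (intro mult_left_mono) auto
  moreover have "x^2 * (2 / s) + s / 2 * y^2 - 2 * (x * y) = (2 * x - s * y)^2 / (2 * s)"
    using s0 by (simp add: field_simps power2_eq_square)
  moreover have "(2 * x - s * y)^2 / (2 * s) \<ge> 0" using s0 by simp
  ultimately show ?thesis unfolding x_def[symmetric] y_def[symmetric] by linarith
qed

lemma final_ineq:
  fixes a p :: "'n::finite \<Rightarrow> 'n \<Rightarrow> complex" and c :: "'n \<Rightarrow> real" and K :: "'n \<Rightarrow> 'n \<Rightarrow> real"
  assumes ah: "\<forall>i j. a j i = cnj (a i j)"
    and ph: "\<forall>i j. p j i = cnj (p i j)"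
    and pidem: "\<forall>i. (\<Sum>k\<in>UNIV. p i k * p k i) = p i i"
    and c0: "\<forall>i. c i \<ge> 0"
    and a0: "\<forall>i j. c i = 0 \<longrightarrow> a i j = 0"
    and Kd: "\<forall>i. c i > 0 \<longrightarrow> K i i * c i = 1"
    and Kg: "\<forall>i j. c i > 0 \<longrightarrow> c j > 0 \<longrightarrow> K i j \<ge> 2 / (c i + c j)"
    and Ks: "\<forall>i j. K i j = K j i"
    and b: "\<forall>i j. b i j = (if i = j then complex_of_real (c i) else 0) - a i j"
  shows "(\<Sum>i\<in>UNIV. \<Sum>k\<in>UNIV. a i k * (complex_of_real (K k i) * b k i))
     \<le> complex_of_real ((sum c UNIV - (2 * Re (\<Sum>i\<in>UNIV. \<Sum>k\<in>UNIV. (a i k - b i k) * p k i)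
            - Re (\<Sum>i\<in>UNIV. (a i i - b i i)))) / 2)"
proof -
  have a0': "a j i = 0" if "c i = 0" for i j using a0 ah that by (metis complex_cnj_zero)
  have aii: "a i i = complex_of_real (Re (a i i))" for i
  proof -
    have e: "a i i = cnj (a i i)" using ah by blast
    have "Im (a i i) = 0" using arg_cong[OF e, of Im] by simp
    thus ?thesis by (simp add: complex_eq_iff)
  qed
  have aa: "a i k * a k i = complex_of_real ((cmod (a i k))^2)" for i k
  proof -
    have "a k i = cnj (a i k)" using ah by blast
    thus ?thesis by (simp only: complex_norm_square)
  qed
  have pp: "p i k * p k i = complex_of_real ((cmod (p i k))^2)" for i k
  proof -
    have "p k i = cnj (p i k)" using ph by blast
    thus ?thesis by (simp only: complex_norm_square)
  qed
  have trm: "a i k * (complex_of_real (K k i) * b k i)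
      = (if i = k then a i i else 0) - complex_of_real ((cmod (a i k))^2 * K i k)" for i k
  proof (cases "i = k")
    case True
    have "a i i * complex_of_real (K i i) * complex_of_real (c i) = a i i"
    proof (cases "c i = 0")
      case True thus ?thesis using a0 by simp
    next
      case False
      hence "K i i * c i = 1" using Kd c0 by (simp add: order_le_neq_trans)
      hence "complex_of_real (K i i) * complex_of_real (c i) = 1" by (metis of_real_mult of_real_1)
      thus ?thesis by (simp add: mult.assoc)
    qed
    moreover have "a i i * a i i = complex_of_real ((cmod (a i i))^2)" using aa[of i i] by simp
    moreover have "b i i = complex_of_real (c i) - a i i" using b by simp
    moreover have "a i i * (complex_of_real (K i i) * (complex_of_real (c i) - a i i))
      = a i i * complex_of_real (K i i) * complex_of_real (c i) - complex_of_real (K i i) * (a i i * a i i)"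
      by (simp add: algebra_simps)
    ultimately show ?thesis using True by (simp add: mult.commute)
  next
    case False
    have "b k i = - a k i" using b False by simp
    thus ?thesis using aa[of i k] Ks False by (simp add: algebra_simps)
  qed
  define L where "L = (\<Sum>i\<in>UNIV. Re (a i i)) - (\<Sum>i\<in>UNIV. \<Sum>k\<in>UNIV. (cmod (a i k))^2 * K i k)"
  have LHS: "(\<Sum>i\<in>UNIV. \<Sum>k\<in>UNIV. a i k * (complex_of_real (K k i) * b k i)) = complex_of_real L"
  proof -
    have "(\<Sum>i\<in>UNIV. \<Sum>k\<in>UNIV. a i k * (complex_of_real (K k i) * b k i))
        = (\<Sum>i\<in>UNIV. a i i - (\<Sum>k\<in>UNIV. complex_of_real ((cmod (a i k))^2 * K i k)))"
      by (simp add: trm sum_subtractf)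
    also have "\<dots> = complex_of_real L"
      unfolding L_def of_real_diff of_real_sum sum_subtractf using aii by simp
    finally show ?thesis .
  qed
  define Sap where "Sap = (\<Sum>i\<in>UNIV. \<Sum>k\<in>UNIV. Re (a i k * p k i))"
  define Pc where "Pc = (\<Sum>i\<in>UNIV. \<Sum>k\<in>UNIV. c i * (cmod (p i k))^2)"
  have pii: "Re (p i i) = (\<Sum>k\<in>UNIV. (cmod (p i k))^2)" for i
  proof -
    have "p i i = (\<Sum>k\<in>UNIV. complex_of_real ((cmod (p i k))^2))" using pidem pp by simp
    thus ?thesis by (simp add: Re_sum)
  qed
  have inner: "Re (\<Sum>i\<in>UNIV. \<Sum>k\<in>UNIV. (a i k - b i k) * p k i) = 2 * Sap - Pc"
  proof -
    have "(a i k - b i k) * p k i = 2 * (a i k * p k i) - (if i = k then complex_of_real (c i) * p i i else 0)" for i k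
    proof -
      have bb: "b i k = (if i = k then complex_of_real (c i) else 0) - a i k" using b by blast
      show ?thesis unfolding bb by (cases "i = k") (simp_all add: algebra_simps)
    qed
    hence "Re (\<Sum>i\<in>UNIV. \<Sum>k\<in>UNIV. (a i k - b i k) * p k i)
        = (\<Sum>i\<in>UNIV. 2 * (\<Sum>k\<in>UNIV. Re (a i k * p k i)) - c i * Re (p i i))"
      by (simp add: sum_subtractf sum_distrib_left)
    also have "\<dots> = 2 * Sap - Pc"
      unfolding Sap_def Pc_def pii by (simp add: sum_subtractf sum_distrib_left)
    finally show ?thesis .
  qed
  have diagp: "Re (\<Sum>i\<in>UNIV. (a i i - b i i)) = 2 * (\<Sum>i\<in>UNIV. Re (a i i)) - sum c UNIV"
  proof -
    have "a i i - b i i = 2 * a i i - complex_of_real (c i)" for i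
    proof -
      have bb: "b i i = complex_of_real (c i) - a i i" using b by simp
      show ?thesis unfolding bb by simp
    qed
    hence "(\<Sum>i\<in>UNIV. (a i i - b i i)) = (\<Sum>i\<in>UNIV. 2 * a i i - complex_of_real (c i))"
      by (intro sum.cong refl)
    also have "Re \<dots> = 2 * (\<Sum>i\<in>UNIV. Re (a i i)) - sum c UNIV"
      by (simp add: sum_subtractf sum_distrib_left Re_sum)
    finally show ?thesis .
  qed
  define R where "R = (sum c UNIV - (2 * Re (\<Sum>i\<in>UNIV. \<Sum>k\<in>UNIV. (a i k - b i k) * p k i)
            - Re (\<Sum>i\<in>UNIV. (a i i - b i i)))) / 2"
  have R: "R = (\<Sum>i\<in>UNIV. Re (a i i)) - 2 * Sap + Pc"
    unfolding R_def inner diagp by simp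
  have Psym: "Pc = (\<Sum>i\<in>UNIV. \<Sum>k\<in>UNIV. c k * (cmod (p i k))^2)"
  proof -
    have "Pc = (\<Sum>k\<in>UNIV. \<Sum>i\<in>UNIV. c i * (cmod (p i k))^2)" unfolding Pc_def by (rule sum.swap)
    also have "\<dots> = (\<Sum>k\<in>UNIV. \<Sum>i\<in>UNIV. c i * (cmod (p k i))^2)"
    proof (intro sum.cong refl)
      fix k i :: 'n
      have "p i k = cnj (p k i)" using ph by blast
      thus "c i * (cmod (p i k))^2 = c i * (cmod (p k i))^2" by simp
    qed
    finally show ?thesis .
  qed
  have "R - L = (\<Sum>i\<in>UNIV. \<Sum>k\<in>UNIV. (cmod (a i k))^2 * K i k + (c i + c k) / 2 * (cmod (p i k))^2
                 - 2 * Re (a i k * cnj (p i k)))"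
  proof -
    have pk: "p k i = cnj (p i k)" for i k using ph by blast
    have "Pc = (Pc + Pc) / 2" by simp
    also have "\<dots> = (\<Sum>i\<in>UNIV. \<Sum>k\<in>UNIV. (c i + c k) / 2 * (cmod (p i k))^2)"
      apply (subst (2) Psym) unfolding Pc_def
      by (simp add: sum.distrib[symmetric] sum_divide_distrib algebra_simps)
    finally have Pc2: "Pc = \<dots>" .
    have Sap2: "Sap = (\<Sum>i\<in>UNIV. \<Sum>k\<in>UNIV. Re (a i k * cnj (p i k)))"
      unfolding Sap_def by (intro sum.cong refl) (subst pk, rule refl)
    show ?thesis unfolding R L_def Sap2 Pc2
      by (simp add: sum_subtractf sum.distrib sum_distrib_left algebra_simps)
  qed
  also have "\<dots> \<ge> 0"
  proof (intro sum_nonneg)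
    fix i k :: 'n
    show "0 \<le> (cmod (a i k))^2 * K i k + (c i + c k) / 2 * (cmod (p i k))^2 - 2 * Re (a i k * cnj (p i k))"
    proof (rule term_nonneg)
      show "0 \<le> c i + c k" using c0 by (simp add: add_nonneg_nonneg)
      assume "a i k \<noteq> 0"
      hence "c i \<noteq> 0" "c k \<noteq> 0" using a0 a0' by blast+
      hence "c i > 0" "c k > 0" using c0 by (simp_all add: order_le_neq_trans)
      thus "0 < c i + c k \<and> 2 / (c i + c k) \<le> K i k" using Kg by simp
    qed
  qed
  finally have "L \<le> R" by simp
  thus ?thesis unfolding LHS R_def[symmetric] by (simp add: less_eq_complex_def)
qed



lemma psd_add: "psd A \<Longrightarrow> psd B \<Longrightarrow> psd (A + B)"
  unfolding psd_iff herm_def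
  by (simp add: adjoint_add matrix_vector_mult_add_rdistrib cinner_add_right add_nonneg_nonneg)

lemma conj_back:
  assumes "adjoint U ** U = mat 1"
  shows "adjoint U ** (U ** D ** adjoint U) ** U = D"
proof -
  have "adjoint U ** (U ** D ** adjoint U) ** U = (adjoint U ** U) ** D ** (adjoint U ** U)"
    by (simp add: matrix_mul_assoc)
  thus ?thesis using assms by simp
qed

lemma trace_conj2:
  assumes "U ** adjoint U = mat 1"
  shows "trace (adjoint U ** M ** U) = trace M"
  using trace_conj[of "adjoint U" M] assms by simp

lemma conj_mult2:
  assumes "U ** adjoint U = mat 1"
  shows "(adjoint U ** X ** U) ** (adjoint U ** Y ** U) = adjoint U ** (X ** Y) ** U"
  using conj_prod[of "adjoint U" X Y] assms by simp

lemma trace_mm: "trace (X ** Y) = (\<Sum>i\<in>UNIV. \<Sum>k\<in>UNIV. X $ i $ k * Y $ k $ i)"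
  by (simp add: trace_def matrix_matrix_mult_def)

theorem mainTheorem4:
  fixes A B :: "complex^'n^'n"
  assumes "psd A" and "psd B"
  shows "trace (A ** matrix_quotient B (A + B))
           \<le> complex_of_real ((Re (trace (A + B)) - trace_norm (A - B)) / 2)"
proof -
  note pA = assms(1) and pB = assms(2)
  define C where "C = A + B"
  have pC: "psd C" unfolding C_def using pA pB by (rule psd_add)
  obtain U c where U1: "adjoint U ** U = mat 1" and U2: "U ** adjoint U = mat 1"
    and Ceq: "C = U ** diag (\<lambda>i. complex_of_real (c i)) ** adjoint U"
    using spectral[OF psd_herm[OF pC]] by blast
  define A' where "A' = adjoint U ** A ** U"
  define B' where "B' = adjoint U ** B ** U"
  have pA': "psd A'" unfolding A'_def by (rule psd_conj[OF pA])
  have pB': "psd B'" unfolding B'_def by (rule psd_conj[OF pB])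
  have AB': "A' + B' = diag (\<lambda>i. complex_of_real (c i))"
  proof -
    have "A' + B' = adjoint U ** C ** U" unfolding A'_def B'_def C_def by (simp add: mm_add_l mm_add_r)
    thus ?thesis unfolding Ceq conj_back[OF U1] .
  qed
  have ABii: "A' $ i $ i + B' $ i $ i = complex_of_real (c i)" for i
    using arg_cong[OF AB', of "\<lambda>M. M $ i $ i"] by simp
  have c0: "\<forall>i. c i \<ge> 0"
  proof
    fix i
    have "Re (A' $ i $ i) \<ge> 0" "Re (B' $ i $ i) \<ge> 0"
      using psd_diag_nonneg[OF pA'] psd_diag_nonneg[OF pB'] by blast+
    thus "c i \<ge> 0" using arg_cong[OF ABii[of i], of Re] by simp
  qed
  have zero: "A' $ i $ j = 0 \<and> A' $ j $ i = 0 \<and> B' $ i $ j = 0 \<and> B' $ j $ i = 0" if "c i = 0" for i j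
  proof -
    have "Re (A' $ i $ i) \<ge> 0" "Re (B' $ i $ i) \<ge> 0"
      using psd_diag_nonneg[OF pA'] psd_diag_nonneg[OF pB'] by blast+
    moreover have "Re (A' $ i $ i) + Re (B' $ i $ i) = 0" using arg_cong[OF ABii[of i], of Re] that by simp
    ultimately have "Re (A' $ i $ i) = 0" "Re (B' $ i $ i) = 0" by linarith+
    thus ?thesis using psd_zero_diag[OF pA'] psd_zero_diag[OF pB'] by blast
  qed
  have B0: "\<forall>i j. (adjoint U ** B ** U) $ i $ j \<noteq> 0 \<longrightarrow> c i > 0 \<and> c j > 0"
    using zero c0 unfolding B'_def[symmetric] by (metis order_le_neq_trans)
  have mq: "matrix_quotient B C = U ** (\<chi> i j. complex_of_real (Kf c i j) * B' $ i $ j) ** adjoint U"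
    using mq_formula[OF U1 U2 Ceq c0 B0] unfolding B'_def .
  define Q' where "Q' = (\<chi> i j. complex_of_real (Kf c i j) * B' $ i $ j)"
  have trLHS: "trace (A ** matrix_quotient B C) = (\<Sum>i\<in>UNIV. \<Sum>k\<in>UNIV. A' $ i $ k * (complex_of_real (Kf c k i) * B' $ k $ i))"
  proof -
    have "trace (A ** matrix_quotient B C) = trace ((A ** U ** Q') ** adjoint U)"
      unfolding mq Q'_def by (simp add: matrix_mul_assoc)
    also have "\<dots> = trace (adjoint U ** (A ** U ** Q'))" by (rule trace_mul_sym)
    also have "\<dots> = trace (A' ** Q')" unfolding A'_def by (simp add: matrix_mul_assoc)
    finally show ?thesis unfolding trace_mm Q'_def by simp
  qed
  define X where "X = A - B"
  have hX: "herm X" using pA pB unfolding X_def psd_def herm_def by (simp add: adjoint_diff)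
  obtain V x where V1: "adjoint V ** V = mat 1" and V2: "V ** adjoint V = mat 1"
    and Xeq: "X = V ** diag (\<lambda>i. complex_of_real (x i)) ** adjoint V"
    using spectral[OF hX] by blast
  have tn: "trace_norm X = (\<Sum>i\<in>UNIV. \<bar>x i\<bar>)" by (rule trace_norm_eq[OF V1 Xeq])
  define ind where "ind i = (if x i \<ge> 0 then 1 else 0 :: real)" for i
  define P where "P = V ** diag (\<lambda>i. complex_of_real (ind i)) ** adjoint V"
  have PP: "P ** P = P"
  proof -
    have "(\<lambda>i. complex_of_real (ind i) * complex_of_real (ind i)) = (\<lambda>i. complex_of_real (ind i))"
      by (rule ext) (simp add: ind_def)
    thus ?thesis unfolding P_def conj_prod[OF V1] diag_mult by simp
  qed
  have hP: "adjoint P = P" unfolding P_def by (simp add: adjoint_mult adjoint_diag matrix_mul_assoc)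
  have tnP: "(\<Sum>i\<in>UNIV. \<bar>x i\<bar>) = Re (2 * trace (X ** P) - trace X)"
  proof -
    have "trace (X ** P) = (\<Sum>i\<in>UNIV. complex_of_real (x i) * complex_of_real (ind i))"
      unfolding Xeq P_def conj_prod[OF V1] diag_mult trace_conj[OF V1] trace_diag ..
    moreover have "trace X = (\<Sum>i\<in>UNIV. complex_of_real (x i))"
      unfolding Xeq trace_conj[OF V1] trace_diag ..
    ultimately have "Re (2 * trace (X ** P) - trace X) = (\<Sum>i\<in>UNIV. 2 * (x i * ind i) - x i)"
      by (simp add: Re_sum sum_subtractf sum_distrib_left)
    also have "\<dots> = (\<Sum>i\<in>UNIV. \<bar>x i\<bar>)" by (intro sum.cong refl) (simp add: ind_def)
    finally show ?thesis by simp
  qed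
  define P' where "P' = adjoint U ** P ** U"
  have X': "adjoint U ** X ** U = A' - B'" unfolding X_def A'_def B'_def by (simp add: mm_diff_l mm_diff_r)
  have trXP: "trace (X ** P) = trace ((A' - B') ** P')"
    unfolding X'[symmetric] P'_def conj_mult2[OF U2] trace_conj2[OF U2] ..
  have trX: "trace X = trace (A' - B')"
    unfolding X'[symmetric] trace_conj2[OF U2] ..
  have hP': "adjoint P' = P'" unfolding P'_def by (simp add: adjoint_mult hP matrix_mul_assoc)
  have PP': "P' ** P' = P'" unfolding P'_def conj_mult2[OF U2] PP ..
  have trC: "Re (trace C) = sum c UNIV"
  proof -
    have "trace C = (\<Sum>i\<in>UNIV. complex_of_real (c i))" unfolding Ceq trace_conj[OF U1] trace_diag ..
    thus ?thesis by (simp add: Re_sum)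
  qed
  have main: "(\<Sum>i\<in>UNIV. \<Sum>k\<in>UNIV. A' $ i $ k * (complex_of_real (Kf c k i) * B' $ k $ i))
     \<le> complex_of_real ((sum c UNIV - (2 * Re (\<Sum>i\<in>UNIV. \<Sum>k\<in>UNIV. (A' $ i $ k - B' $ i $ k) * P' $ k $ i)
            - Re (\<Sum>i\<in>UNIV. (A' $ i $ i - B' $ i $ i)))) / 2)"
  proof (rule final_ineq)
    show "\<forall>i j. A' $ j $ i = cnj (A' $ i $ j)"
      using pA' unfolding psd_def by (metis adjoint_nth)
    show "\<forall>i j. P' $ j $ i = cnj (P' $ i $ j)"
      using hP' by (metis adjoint_nth)
    show "\<forall>i. (\<Sum>k\<in>UNIV. P' $ i $ k * P' $ k $ i) = P' $ i $ i"
    proof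
      fix i
      have "(P' ** P') $ i $ i = P' $ i $ i" using PP' by simp
      thus "(\<Sum>k\<in>UNIV. P' $ i $ k * P' $ k $ i) = P' $ i $ i" by (simp add: matrix_matrix_mult_def)
    qed
    show "\<forall>i. c i \<ge> 0" by (rule c0)
    show "\<forall>i j. c i = 0 \<longrightarrow> A' $ i $ j = 0" using zero by blast
    show "\<forall>i. c i > 0 \<longrightarrow> Kf c i i * c i = 1"
      using kf_diag by (simp add: Kf_def)
    show "\<forall>i j. c i > 0 \<longrightarrow> c j > 0 \<longrightarrow> Kf c i j \<ge> 2 / (c i + c j)"
      using kf_ge by (simp add: Kf_def)
    show "\<forall>i j. Kf c i j = Kf c j i" by (simp add: Kf_def mult.commute)
    show "\<forall>i j. B' $ i $ j = (if i = j then complex_of_real (c i) else 0) - A' $ i $ j"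
    proof (intro allI)
      fix i j
      have "A' $ i $ j + B' $ i $ j = (if i = j then complex_of_real (c i) else 0)"
        using arg_cong[OF AB', of "\<lambda>M. M $ i $ j"] by simp
      thus "B' $ i $ j = (if i = j then complex_of_real (c i) else 0) - A' $ i $ j"
        by (simp add: algebra_simps)
    qed
  qed
  have "trace_norm (A - B) = 2 * Re (\<Sum>i\<in>UNIV. \<Sum>k\<in>UNIV. (A' $ i $ k - B' $ i $ k) * P' $ k $ i)
            - Re (\<Sum>i\<in>UNIV. (A' $ i $ i - B' $ i $ i))"
    unfolding X_def[symmetric] tn tnP trXP trX unfolding trace_mm by (simp add: trace_def)
  thus ?thesis using main unfolding C_def[symmetric] trLHS trC by simp
qed

end
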